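(* For integers $k\ge0$ and $n\ge1$, $$P_{n+k}^{(\alpha,\beta,v,k)}(t)=\big(\mathcal C_n^k\big)^{-1}\Big(\frac{d^n}{dt^n}W^{(k+n)}(t)\Big)\big(W^{(k)}(t)\big)^{-1},\qquad t\in(0,1),$$ where $\mathcal C_n^k=(-1)^n(\alpha+\beta+3+2k+n)_n\,\mathrm{diag}\Big(\frac{\kappa_{v,\beta}+2(k+1+n)}{\kappa_{v,\beta}+2(k+1)},\frac{\kappa_{-v,\beta}+2(k+1+n)}{\kappa_{-v,\beta}+2(k+1)}\Big)$.
   Context: Fix real $\alpha,\beta,v$ with $\alpha>-1$, $\beta>-1$, $|\alpha-\beta|<|v|<\alpha+\beta+2$; $\kappa_{\pm v,\pm\beta}=\alpha\pm v\pm\beta$; $(x)_n$ is the Pochhammer symbol. For real parameters $a,b,v$ write $\kappa'_{\pm v,\pm b}=a\pm v\pm b$ and define $$W^{(a,b,v)}(t)=t^a(1-t)^b\begin{pmatrix}\frac{v(\kappa'_{v,b}+2)}{\kappa'_{v,-b}}t^2-(\kappa'_{v,b}+2)t+(a+1) & (a+b+2)t-(a+1)\\ (a+b+2)t-(a+1) & -\frac{v(\kappa'_{-v,b}+2)}{\kappa'_{-v,-b}}t^2-(\kappa'_{-v,b}+2)t+(a+1)\end{pmatrix},\quad t\in(0,1),$$ and $W^{(k)}=W^{(\alpha+k,\beta+k,v)}$ for integers $k\ge0$. Let $(P_n^{(\alpha,\beta,v)})$ be the monic $2\times2$ matrix polynomials orthogonal w.r.t. $\int_0^1PW^{(0)}Q^*dt$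 and $P_n^{(\alpha,\beta,v,k)}=\frac{(n-k)!}{n!}\frac{d^k}{dt^k}P_n^{(\alpha,\beta,v)}$ for $n\ge k$. *)

theory Defs
  imports "HOL-Analysis.Analysis"
begin

type_synonym mat2 = "real^2^2"

definition mat2 :: "real \<Rightarrow> real \<Rightarrow> real \<Rightarrow> real \<Rightarrow> mat2" where
  "mat2 a b c d = vector [vector [a, b], vector [c, d]]"

definition mderiv :: "nat \<Rightarrow> (real \<Rightarrow> mat2) \<Rightarrow> real \<Rightarrow> mat2" where
  "mderiv n F t = (\<chi> i j. (deriv ^^ n) (\<lambda>s. F s $ i $ j) t)"

definition Wt :: "real \<Rightarrow> real \<Rightarrow> real \<Rightarrow> real \<Rightarrow> mat2" where
  "Wt a b v t = (t powr a * (1 - t) powr b) *\<^sub>R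
     mat2 (v * ((a + v + b) + 2) / (a + v - b) * t^2 - ((a + v + b) + 2) * t + (a + 1))
          ((a + b + 2) * t - (a + 1))
          ((a + b + 2) * t - (a + 1))
          (- v * ((a - v + b) + 2) / (a - v - b) * t^2 - ((a - v + b) + 2) * t + (a + 1))"

definition mpoly :: "(nat \<Rightarrow> nat \<Rightarrow> mat2) \<Rightarrow> nat \<Rightarrow> real \<Rightarrow> mat2" where
  "mpoly C n t = (\<Sum>i\<le>n. t ^ i *\<^sub>R C n i)"

definition monic_orth :: "(real \<Rightarrow> mat2) \<Rightarrow> (nat \<Rightarrow> nat \<Rightarrow> mat2) \<Rightarrow> bool" where
  "monic_orth W C \<longleftrightarrow> (\<forall>n. C n n = mat 1) \<and>
     (\<forall>n m. n \<noteq> m \<longrightarrow>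
        ((\<lambda>t. mpoly C n t ** W t ** transpose (mpoly C m t)) has_integral 0) {0..1})"

end

theory Submission
  imports Defs "HOL-Computational_Algebra.Polynomial"
begin

type_synonym mp = "real poly^2^2"

definition mev :: "mp \<Rightarrow> real \<Rightarrow> mat2" where "mev X t = (\<chi> i j. poly (X$i$j) t)"
definition mpd :: "mp \<Rightarrow> mp" where "mpd X = (\<chi> i j. pderiv (X$i$j))"
definition pm2 :: "real poly \<Rightarrow> real poly \<Rightarrow> real poly \<Rightarrow> real poly \<Rightarrow> mp" where
  "pm2 a b c d = vector [vector [a,b], vector [c,d]]"
definition cm :: "mat2 \<Rightarrow> mp" where "cm M = (\<chi> i j. [:(M$i$j):])"

lemma mat2_nth[simp]: "mat2 a b c d $1$1 = a" "mat2 a b c d $1$2 = b" "mat2 a b c d $2$1 = c" "mat2 a b c d $2$2 = d"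
  by (simp_all add: mat2_def)
lemma pm2_nth[simp]: "pm2 a b c d $1$1 = a" "pm2 a b c d $1$2 = b" "pm2 a b c d $2$1 = c" "pm2 a b c d $2$2 = d"
  by (simp_all add: pm2_def)

lemma mat_eq2: "(A::'a^2^2) = B \<longleftrightarrow> A$1$1 = B$1$1 \<and> A$1$2 = B$1$2 \<and> A$2$1 = B$2$1 \<and> A$2$2 = B$2$2"
  by (auto simp: vec_eq_iff forall_2)

lemma mat2_eta: "A = mat2 (A$1$1) (A$1$2) (A$2$1) (A$2$2)"
  by (simp add: mat_eq2)
lemma pm2_eta: "A = pm2 (A$1$1) (A$1$2) (A$2$1) (A$2$2)"
  by (simp add: mat_eq2)

lemma mult2_nth[simp]: "((A::'a::semiring_1^2^2) ** B) $ i $ j = A$i$1 * B$1$j + A$i$2 * B$2$j"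
  by (simp add: matrix_matrix_mult_def sum_2)

lemma mev_nth[simp]: "mev X t $ i $ j = poly (X$i$j) t" by (simp add: mev_def)
lemma mpd_nth[simp]: "mpd X $ i $ j = pderiv (X$i$j)" by (simp add: mpd_def)
lemma cm_nth[simp]: "cm M $ i $ j = [:(M$i$j):]" by (simp add: cm_def)

lemma mev_mult: "mev (X ** Y) t = mev X t ** mev Y t"
  by (simp add: vec_eq_iff)
lemma mev_add: "mev (X + Y) t = mev X t + mev Y t"
  by (simp add: vec_eq_iff)
lemma mev_diff: "mev (X - Y) t = mev X t - mev Y t"
  by (simp add: vec_eq_iff)
lemma mev_transpose: "mev (transpose X) t = transpose (mev X t)"
  by (simp add: vec_eq_iff transpose_def)
lemma mev_cm: "mev (cm M) t = M"
  by (simp add: vec_eq_iff)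
lemma mev_one: "mev (mat 1) t = mat 1"
  by (simp add: vec_eq_iff mat_def)
lemma mev_zero: "mev 0 t = 0"
  by (simp add: vec_eq_iff)


definition Qp :: "real \<Rightarrow> real \<Rightarrow> real \<Rightarrow> mp" where
  "Qp a b v = pm2 [:(a+1), (-((a+v+b)+2)), (v * ((a+v+b)+2)/(a+v-b)):] [:(-(a+1)), (a+b+2):]
                   [:(-(a+1)), (a+b+2):] [:(a+1), (-((a-v+b)+2)), (- v * ((a-v+b)+2)/(a-v-b)):]"

definition pmsc :: "real poly \<Rightarrow> mp \<Rightarrow> mp" where "pmsc p X = (\<chi> i j. p * X$i$j)"
lemma pmsc_nth[simp]: "pmsc p X $i$j = p * X$i$j" by (simp add: pmsc_def)

definition Ep :: "real \<Rightarrow> real \<Rightarrow> real \<Rightarrow> mp" where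
  "Ep a b v = (let d = a - b; s = a + b + 2; q0 = (v^2-d^2)/(v * (s+v)*(s-v));
      r1 = (s+v+2)/(s+v); r2 = (s-v+2)/(s-v) in
     pm2 [:q0, r1, -r1:] [:q0, -2*(v-d)/((s+v)*(s-v)):]
         [:-q0, 2*(v+d)/((s+v)*(s-v)):] [:-q0, r2, -r2:])"

definition Gp :: "real \<Rightarrow> real \<Rightarrow> real \<Rightarrow> mp" where
  "Gp a b v = (let d = a - b; s = a + b + 2;
      r1 = (s+v+2)/(s+v); r2 = (s-v+2)/(s-v) in
     pm2 [:r1*((a+2) - d/v), -r1*(s+2):] [:(s+2)*(v-d)/(v * (s+v)):]
         [:(s+2)*(v+d)/(v * (s-v)):] [:r2*((a+2) + d/v), -r2*(s+2):])"

lemma Wt_eq: "Wt a b v t = (t powr a * (1-t) powr b) *\<^sub>R mev (Qp a b v) t"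
  unfolding Wt_def Qp_def by (simp add: mat_eq2 algebra_simps power2_eq_square)

lemma E_poly:
  assumes "v \<noteq> 0" "a+v-b \<noteq> 0" "a-v-b \<noteq> 0" "a+b+2+v \<noteq> 0" "a+b+2-v \<noteq> 0"
  shows "Ep a b v ** Qp a b v = pmsc [:0,1,-1:] (Qp (a+1) (b+1) v)"
proof -
  obtain D1 where D1: "a+v-b = D1" by simp
  obtain D2 where D2: "a-v-b = D2" by simp
  obtain P where P: "a+b+2+v = P" by simp
  obtain M where M: "a+b+2-v = M" by simp
  have D1': "a+1+v-(b+1) = D1" and D2': "a+1-v-(b+1) = D2" using D1 D2 by simp_all
  have nz: "v \<noteq> 0" "D1 \<noteq> 0" "D2 \<noteq> 0" "P \<noteq> 0" "M \<noteq> 0" using assms D1 D2 P M by auto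
  show ?thesis unfolding Ep_def Qp_def mat_eq2 Let_def D1 D2 D1' D2' P M
    apply (simp add: pCons_eq_iff)
    apply (intro conjI)
    apply (simp_all add: field_simps nz)
    apply (intro conjI)
    apply (unfold P[symmetric] M[symmetric] D1[symmetric] D2[symmetric])
    apply algebra+
    done
qed

lemma G_poly:
  assumes "v \<noteq> 0" "a+v-b \<noteq> 0" "a-v-b \<noteq> 0" "a+b+2+v \<noteq> 0" "a+b+2-v \<noteq> 0"
  shows "Gp a b v ** Qp a b v = pmsc [:a+1, -(a+b+2):] (Qp (a+1) (b+1) v)
           + pmsc [:0,1,-1:] (mpd (Qp (a+1) (b+1) v))"
proof -
  obtain D1 where D1: "a+v-b = D1" by simp
  obtain D2 where D2: "a-v-b = D2" by simp
  obtain P where P: "a+b+2+v = P" by simp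
  obtain M where M: "a+b+2-v = M" by simp
  have D1': "a+1+v-(b+1) = D1" and D2': "a+1-v-(b+1) = D2" using D1 D2 by simp_all
  have nz: "v \<noteq> 0" "D1 \<noteq> 0" "D2 \<noteq> 0" "P \<noteq> 0" "M \<noteq> 0" using assms D1 D2 P M by auto
  show ?thesis unfolding Gp_def Qp_def mat_eq2 Let_def D1 D2 D1' D2' P M
    apply (simp add: pCons_eq_iff pderiv_pCons)
    apply (intro conjI)
    apply (simp_all add: field_simps nz)
    apply (intro conjI)
    apply (unfold P[symmetric] M[symmetric] D1[symmetric] D2[symmetric])
    apply algebra+
    done
qed

lemma mev_pmsc: "mev (pmsc p X) t = poly p t *\<^sub>R mev X t"
  by (simp add: mat_eq2)
lemma mult_scaleR_right2: "(A::mat2) ** (c *\<^sub>R B) = c *\<^sub>R (A ** B)"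
  by (simp add: vec_eq_iff matrix_matrix_mult_def sum_distrib_left algebra_simps)
lemma mult_scaleR_left2: "(c *\<^sub>R A::mat2) ** B = c *\<^sub>R (A ** B)"
  by (simp add: vec_eq_iff matrix_matrix_mult_def sum_distrib_left algebra_simps)

definition mder :: "(real \<Rightarrow> mat2) \<Rightarrow> mat2 \<Rightarrow> real \<Rightarrow> bool" where
  "mder F F' t \<longleftrightarrow> (\<forall>i j. ((\<lambda>s. F s $ i $ j) has_real_derivative (F' $ i $ j)) (at t))"

lemma mder_mult:
  assumes "mder F F' t" "mder G G' t"
  shows "mder (\<lambda>s. F s ** G s) (F' ** G t + F t ** G') t"
  using assms unfolding mder_def
  by (auto intro!: derivative_eq_intros simp: algebra_simps)

lemma mder_mev: "mder (mev X) (mev (mpd X) t) t"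
  unfolding mder_def by simp

lemma mder_transpose: "mder F F' t \<Longrightarrow> mder (\<lambda>s. transpose (F s)) (transpose F') t"
  unfolding mder_def by (simp add: transpose_def)

lemma mder_cong: "mder F F' t \<Longrightarrow> F' = F'' \<Longrightarrow> mder F F'' t" by simp

lemma Wt_succ:
  assumes "v \<noteq> 0" "a+v-b \<noteq> 0" "a-v-b \<noteq> 0" "a+b+2+v \<noteq> 0" "a+b+2-v \<noteq> 0"
    and t: "0 < t" "t < 1"
  shows "Wt (a+1) (b+1) v t = mev (Ep a b v) t ** Wt a b v t"
proof -
  have p1: "t powr (a+1) = t powr a * t" using t by (simp add: powr_add)
  have p2: "(1-t) powr (b+1) = (1-t) powr b * (1-t)" using t by (simp add: powr_add)
  have "mev (Ep a b v) t ** Wt a b v t = (t powr a * (1-t) powr b) *\<^sub>R (mev (Ep a b v ** Qp a b v) t)"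
    by (simp add: Wt_eq mult_scaleR_right2 mev_mult)
  also have "\<dots> = Wt (a+1) (b+1) v t"
    unfolding E_poly[OF assms(1-5)] mev_pmsc Wt_eq p1 p2 by (simp add: algebra_simps)
  finally show ?thesis by simp
qed

lemma Wt_deriv:
  assumes "v \<noteq> 0" "a+v-b \<noteq> 0" "a-v-b \<noteq> 0" "a+b+2+v \<noteq> 0" "a+b+2-v \<noteq> 0"
    and t: "0 < t" "t < 1"
  shows "mder (Wt (a+1) (b+1) v) (mev (Gp a b v) t ** Wt a b v t) t"
  unfolding mder_def
proof (intro allI)
  fix i j :: 2
  have p1: "t powr (a+1) = t powr a * t" using t by (simp add: powr_add)
  have p2: "(1-t) powr (b+1) = (1-t) powr b * (1-t)" using t by (simp add: powr_add)
  have e: "(\<lambda>s. Wt (a+1) (b+1) v s $ i $ j) = (\<lambda>s. (s powr (a+1) * (1-s) powr (b+1)) * poly (Qp (a+1) (b+1) v $ i $ j) s)"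
    by (simp add: Wt_eq)
  have tgt: "(mev (Gp a b v) t ** Wt a b v t) $ i $ j = (t powr a * (1-t) powr b) *
      (poly ([:a+1, -(a+b+2):] * Qp (a+1) (b+1) v $ i $ j) t + poly ([:0,1,-1:] * pderiv (Qp (a+1) (b+1) v $ i $ j)) t)"
  proof -
    have "(mev (Gp a b v) t ** Wt a b v t) $ i $ j = (t powr a * (1-t) powr b) * (mev (Gp a b v ** Qp a b v) t $ i $ j)"
      by (simp add: Wt_eq mult_scaleR_right2 mev_mult del: mev_nth mult2_nth)
    also have "\<dots> = (t powr a * (1-t) powr b) *
      (poly ([:a+1, -(a+b+2):] * Qp (a+1) (b+1) v $ i $ j) t + poly ([:0,1,-1:] * pderiv (Qp (a+1) (b+1) v $ i $ j)) t)"
      unfolding G_poly[OF assms(1-5)] by (simp del: poly_mult)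
    finally show ?thesis .
  qed
  show "((\<lambda>s. Wt (a+1) (b+1) v s $ i $ j) has_real_derivative (mev (Gp a b v) t ** Wt a b v t) $ i $ j) (at t)"
    unfolding e tgt
  proof (rule DERIV_cong)
    have d1: "((\<lambda>s. s powr (a+1)) has_real_derivative (a+1) * t powr a) (at t)"
      using has_real_derivative_powr[of t "a+1"] t by simp
    have d2: "((\<lambda>s. (1-s) powr (b+1)) has_real_derivative ((b+1) * (1-t) powr b) * (-1)) (at t)"
    proof -
      have h: "((\<lambda>z. z powr (b+1)) has_real_derivative (b+1) * (1-t) powr b) (at (1-t))"
        using has_real_derivative_powr[of "1-t" "b+1"] t by simp
      have g: "((\<lambda>s. 1-s) has_real_derivative -1) (at t)" by (auto intro!: derivative_eq_intros)
      show ?thesis using DERIV_chain2[OF h g] by simp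
    qed
    show "((\<lambda>s. (s powr (a+1) * (1-s) powr (b+1)) * poly (Qp (a+1) (b+1) v $ i $ j) s) has_real_derivative
      (((a+1) * t powr a) * (1-t) powr (b+1) + t powr (a+1) * (((b+1) * (1-t) powr b) * (-1))) * poly (Qp (a+1) (b+1) v $ i $ j) t
      + (t powr (a+1) * (1-t) powr (b+1)) * poly (pderiv (Qp (a+1) (b+1) v $ i $ j)) t) (at t)"
      by (rule DERIV_cong[OF DERIV_mult[OF DERIV_mult[OF d1 d2] poly_DERIV]]) (simp add: algebra_simps)
    show "(((a+1) * t powr a) * (1-t) powr (b+1) + t powr (a+1) * (((b+1) * (1-t) powr b) * (-1))) * poly (Qp (a+1) (b+1) v $ i $ j) t
      + (t powr (a+1) * (1-t) powr (b+1)) * poly (pderiv (Qp (a+1) (b+1) v $ i $ j)) t =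
      (t powr a * (1-t) powr b) *
      (poly ([:a+1, -(a+b+2):] * Qp (a+1) (b+1) v $ i $ j) t + poly ([:0,1,-1:] * pderiv (Qp (a+1) (b+1) v $ i $ j)) t)"
      unfolding p1 p2 by (simp add: algebra_simps)
  qed
qed

lemma Wt_sym: "transpose (Wt a b v t) = Wt a b v t"
  by (simp add: Wt_def mat_eq2 transpose_def mat2_def)

lemma GW_sym:
  assumes "v \<noteq> 0" "a+v-b \<noteq> 0" "a-v-b \<noteq> 0" "a+b+2+v \<noteq> 0" "a+b+2-v \<noteq> 0"
  shows "transpose (mev (Gp a b v) t ** Wt a b v t) = mev (Gp a b v) t ** Wt a b v t"
proof -
  have "mev (Gp a b v) t ** Wt a b v t = (t powr a * (1-t) powr b) *\<^sub>R mev (Gp a b v ** Qp a b v) t"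
    by (simp only: Wt_eq mult_scaleR_right2 mev_mult)
  also have "\<dots> = (t powr a * (1-t) powr b) *\<^sub>R mev (pmsc [:a+1, -(a+b+2):] (Qp (a+1) (b+1) v)
           + pmsc [:0,1,-1:] (mpd (Qp (a+1) (b+1) v))) t"
    unfolding G_poly[OF assms] ..
  finally show ?thesis by (simp add: mat_eq2 transpose_def Qp_def)
qed

lemma Wt_0: "a > 0 \<Longrightarrow> Wt a b v 0 = 0" by (simp add: Wt_eq)
lemma Wt_1: "b > 0 \<Longrightarrow> Wt a b v 1 = 0" by (simp add: Wt_eq)

definition mcont :: "(real \<Rightarrow> mat2) \<Rightarrow> bool" where
  "mcont F \<longleftrightarrow> (\<forall>i j. continuous_on {0..1} (\<lambda>s. F s $ i $ j))"

lemma mcont_mult: "mcont F \<Longrightarrow> mcont G \<Longrightarrow> mcont (\<lambda>s. F s ** G s)"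
  unfolding mcont_def mult2_nth by (intro allI continuous_on_add continuous_on_mult) auto
lemma mcont_mev: "mcont (mev X)"
  unfolding mcont_def by (auto intro!: continuous_intros)
lemma mcont_transpose: "mcont F \<Longrightarrow> mcont (\<lambda>s. transpose (F s))"
  unfolding mcont_def by (simp add: transpose_def)
lemma mcont_Wt: assumes "a > 0" "b > 0" shows "mcont (Wt a b v)"
proof -
  have "continuous_on {0..1} (\<lambda>s::real. s powr a)"
    by (rule continuous_on_powr') (use assms in \<open>auto intro!: continuous_intros\<close>)
  moreover have "continuous_on {0..1} (\<lambda>s::real. (1-s) powr b)"
    by (rule continuous_on_powr') (use assms in \<open>auto intro!: continuous_intros\<close>)
  ultimately show ?thesis unfolding mcont_def Wt_eq
    by (auto intro!: continuous_intros)
qed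

definition EI :: "(real \<Rightarrow> mat2) \<Rightarrow> mat2 \<Rightarrow> bool" where
  "EI F I \<longleftrightarrow> (\<forall>i j. ((\<lambda>s. F s $ i $ j) has_integral (I $ i $ j)) {0..1})"

lemma EI_cong: "EI F I \<Longrightarrow> (\<And>s. s \<in> {0..1} \<Longrightarrow> F s = G s) \<Longrightarrow> I = J \<Longrightarrow> EI G J"
  unfolding EI_def using has_integral_eq by (metis (no_types, lifting))
lemma EI_zero: "(\<And>s. F s = 0) \<Longrightarrow> EI F 0"
  unfolding EI_def by simp
lemma EI_add: "EI F I \<Longrightarrow> EI G J \<Longrightarrow> EI (\<lambda>s. F s + G s) (I + J)"
  unfolding EI_def by (auto intro!: has_integral_add)
lemma EI_diff: "EI F I \<Longrightarrow> EI G J \<Longrightarrow> EI (\<lambda>s. F s - G s) (I - J)"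
  unfolding EI_def by (auto intro!: has_integral_diff)
lemma EI_scale: "EI F I \<Longrightarrow> EI (\<lambda>s. c *\<^sub>R F s) (c *\<^sub>R I)"
  unfolding EI_def by (auto intro!: has_integral_mult_right)
lemma EI_rmult: "EI F I \<Longrightarrow> EI (\<lambda>s. F s ** M) (I ** M)"
  unfolding EI_def by (auto intro!: has_integral_add has_integral_mult_left)
lemma EI_lmult: "EI F I \<Longrightarrow> EI (\<lambda>s. M ** F s) (M ** I)"
  unfolding EI_def by (auto intro!: has_integral_add has_integral_mult_right)
lemma EI_transpose: "EI F I \<Longrightarrow> EI (\<lambda>s. transpose (F s)) (transpose I)"
  unfolding EI_def by (simp add: transpose_def)

lemma EI_of_has_integral:
  assumes "(F has_integral I) {0..1}" shows "EI F I"
  unfolding EI_def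
proof (intro allI)
  fix i j :: 2
  have "((\<lambda>x. x $ i) \<circ> F has_integral I $ i) {0..1}"
    by (rule has_integral_linear[OF assms bounded_linear_vec_nth])
  then have "((\<lambda>x. x $ j) \<circ> ((\<lambda>x. x $ i) \<circ> F) has_integral I $ i $ j) {0..1}"
    by (rule has_integral_linear[OF _ bounded_linear_vec_nth])
  then show "((\<lambda>s. F s $ i $ j) has_integral I $ i $ j) {0..1}" by (simp add: o_def)
qed

lemma transpose_add2: "transpose (A + B) = transpose A + transpose (B::'a::semiring_1^'n^'m)"
  by (simp add: vec_eq_iff transpose_def)

locale jac =
  fixes al be v :: real
  assumes al: "al > -1" and be: "be > -1" and v1: "\<bar>al - be\<bar> < \<bar>v\<bar>" and v2: "\<bar>v\<bar> < al + be + 2"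
begin

definition Wl :: "nat \<Rightarrow> real \<Rightarrow> mat2" where "Wl j = Wt (al + real j) (be + real j) v"
definition El :: "nat \<Rightarrow> mp" where "El j = Ep (al + real j) (be + real j) v"
definition Gl :: "nat \<Rightarrow> mp" where "Gl j = Gp (al + real j) (be + real j) v"
definition T :: "nat \<Rightarrow> mp \<Rightarrow> mp" where "T j X = mpd X ** El j + X ** Gl j"

fun TT :: "nat \<Rightarrow> nat \<Rightarrow> mp \<Rightarrow> mp" where
  "TT j 0 X = X"
| "TT j (Suc m) X = T j (TT (Suc j) m X)"

lemma lev:
  shows "v \<noteq> 0" "(al + real j) + v - (be + real j) \<noteq> 0" "(al + real j) - v - (be + real j) \<noteq> 0"
    "(al + real j) + (be + real j) + 2 + v \<noteq> 0" "(al + real j) + (be + real j) + 2 - v \<noteq> 0"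
  using al be v1 v2 by (auto simp: abs_if split: if_splits)

lemma suc_eq: "al + real (Suc j) = (al + real j) + 1" "be + real (Suc j) = (be + real j) + 1"
  by simp_all

lemma Wl_Suc: "0 < t \<Longrightarrow> t < 1 \<Longrightarrow> Wl (Suc j) t = mev (El j) t ** Wl j t"
  unfolding Wl_def El_def suc_eq by (rule Wt_succ[OF lev])

lemma Wl_der: "0 < t \<Longrightarrow> t < 1 \<Longrightarrow> mder (Wl (Suc j)) (mev (Gl j) t ** Wl j t) t"
  unfolding Wl_def Gl_def suc_eq by (rule Wt_deriv[OF lev])

lemma GW_sym_l: "transpose (mev (Gl j) t ** Wl j t) = mev (Gl j) t ** Wl j t"
  unfolding Wl_def Gl_def by (rule GW_sym[OF lev])

lemma Wl_sym: "transpose (Wl j t) = Wl j t"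
  unfolding Wl_def by (rule Wt_sym)

lemma mcont_Wl: "mcont (Wl (Suc j))"
  unfolding Wl_def using al be by (intro mcont_Wt) auto

lemma Wl_0: "Wl (Suc j) 0 = 0" and Wl_1: "Wl (Suc j) 1 = 0"
  unfolding Wl_def using al be by (auto intro!: Wt_0 Wt_1)

lemma IBP:
  fixes X Y :: mp
  shows "\<exists>I. EI (\<lambda>s. mev (mpd Y) s ** Wl (Suc j) s ** transpose (mev X s)) I \<and>
             EI (\<lambda>s. mev Y s ** Wl j s ** transpose (mev (T j X) s)) (- I)"
proof -
  define F where "F s = mev Y s ** (Wl (Suc j) s ** transpose (mev X s))" for s
  define A where "A s = mev (mpd Y) s ** Wl (Suc j) s ** transpose (mev X s)" for s
  define B where "B s = mev Y s ** Wl j s ** transpose (mev (T j X) s)" for s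
  have der: "mder F (A t + B t) t" if t: "0 < t" "t < 1" for t
  proof -
    have "mder F (mev (mpd Y) t ** (Wl (Suc j) t ** transpose (mev X t)) +
       mev Y t ** ((mev (Gl j) t ** Wl j t) ** transpose (mev X t) + Wl (Suc j) t ** transpose (mev (mpd X) t))) t"
      unfolding F_def by (intro mder_mult mder_mev Wl_der mder_transpose t)
    moreover have "mev (mpd Y) t ** (Wl (Suc j) t ** transpose (mev X t)) +
       mev Y t ** ((mev (Gl j) t ** Wl j t) ** transpose (mev X t) + Wl (Suc j) t ** transpose (mev (mpd X) t))
       = A t + B t"
    proof -
      have "Wl j t ** transpose (mev (El j) t) = transpose (mev (El j) t ** Wl j t)"
        by (simp add: matrix_transpose_mul Wl_sym)
      also have "\<dots> = Wl (Suc j) t" using Wl_sym[of "Suc j" t] unfolding Wl_Suc[OF t] .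
      finally have e1: "Wl j t ** transpose (mev (El j) t) = Wl (Suc j) t" .
      have "Wl j t ** transpose (mev (Gl j) t) = transpose (mev (Gl j) t ** Wl j t)"
        by (simp add: matrix_transpose_mul Wl_sym)
      then have e2: "Wl j t ** transpose (mev (Gl j) t) = mev (Gl j) t ** Wl j t"
        using GW_sym_l by simp
      have "B t = mev Y t ** ((Wl j t ** transpose (mev (El j) t)) ** transpose (mev (mpd X) t)
                 + (Wl j t ** transpose (mev (Gl j) t)) ** transpose (mev X t))"
        unfolding B_def T_def mev_add mev_mult matrix_transpose_mul
        by (simp add: matrix_add_ldistrib matrix_mul_assoc transpose_add2 matrix_transpose_mul)
      then show ?thesis unfolding A_def e1 e2
        by (simp add: matrix_add_ldistrib matrix_mul_assoc)
    qed
    ultimately show ?thesis by simp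
  qed
  have contF: "mcont F" unfolding F_def
    by (intro mcont_mult mcont_mev mcont_Wl mcont_transpose)
  have contA: "mcont A" unfolding A_def
    by (intro mcont_mult mcont_mev mcont_Wl mcont_transpose)
  have F0: "F 0 = 0" and F1: "F 1 = 0" unfolding F_def Wl_0 Wl_1 by simp_all
  define I where "I = (\<chi> i l. integral {0..1} (\<lambda>s. A s $ i $ l))"
  have EA: "EI A I" unfolding EI_def I_def
    using contA unfolding mcont_def by (auto intro!: integrable_integral integrable_continuous_real)
  have EAB: "EI (\<lambda>s. A s + B s) 0" unfolding EI_def
  proof (intro allI)
    fix i l :: 2
    have "((\<lambda>s. (A s + B s) $ i $ l) has_integral (F 1 $ i $ l - F 0 $ i $ l)) {0..1}"
    proof (rule fundamental_theorem_of_calculus_interior)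
      show "continuous_on {0..1} (\<lambda>s. F s $ i $ l)" using contF unfolding mcont_def by simp
      fix x :: real assume "x \<in> {0<..<1}"
      then have "((\<lambda>s. F s $ i $ l) has_real_derivative (A x + B x) $ i $ l) (at x)"
        using der[of x] unfolding mder_def by auto
      then show "((\<lambda>s. F s $ i $ l) has_vector_derivative (A x + B x) $ i $ l) (at x)"
        by (simp add: has_real_derivative_iff_has_vector_derivative)
    qed simp
    then show "((\<lambda>s. (A s + B s) $ i $ l) has_integral (0::mat2) $ i $ l) {0..1}"
      by (simp add: F0 F1)
  qed
  have "EI (\<lambda>s. (A s + B s) - A s) (0 - I)" by (rule EI_diff[OF EAB EA])
  then have "EI B (- I)" by (rule EI_cong) auto
  then show ?thesis using EA unfolding A_def B_def by blast
qed

lemma EI_unique: "EI F I \<Longrightarrow> EI F J \<Longrightarrow> I = J"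
  unfolding EI_def vec_eq_iff using has_integral_unique by blast

lemma IBP_BA: "EI (\<lambda>s. mev Y s ** Wl j s ** transpose (mev (T j X) s)) J \<Longrightarrow>
    EI (\<lambda>s. mev (mpd Y) s ** Wl (Suc j) s ** transpose (mev X s)) (- J)"
proof -
  assume h: "EI (\<lambda>s. mev Y s ** Wl j s ** transpose (mev (T j X) s)) J"
  obtain I where I: "EI (\<lambda>s. mev (mpd Y) s ** Wl (Suc j) s ** transpose (mev X s)) I"
    "EI (\<lambda>s. mev Y s ** Wl j s ** transpose (mev (T j X) s)) (- I)" using IBP[of Y j X] by blast
  have "- I = J" using EI_unique[OF I(2) h] .
  then have "I = - J" by (metis minus_minus)
  then show ?thesis using I(1) by simp
qed

lemma IBP_AB: "EI (\<lambda>s. mev (mpd Y) s ** Wl (Suc j) s ** transpose (mev X s)) J \<Longrightarrow>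
    EI (\<lambda>s. mev Y s ** Wl j s ** transpose (mev (T j X) s)) (- J)"
proof -
  assume h: "EI (\<lambda>s. mev (mpd Y) s ** Wl (Suc j) s ** transpose (mev X s)) J"
  obtain I where I: "EI (\<lambda>s. mev (mpd Y) s ** Wl (Suc j) s ** transpose (mev X s)) I"
    "EI (\<lambda>s. mev Y s ** Wl j s ** transpose (mev (T j X) s)) (- I)" using IBP[of Y j X] by blast
  have "I = J" using EI_unique[OF I(1) h] .
  then show ?thesis using I(2) by simp
qed

end

definition plt :: "real poly \<Rightarrow> nat \<Rightarrow> bool" where "plt p m \<longleftrightarrow> (\<forall>l\<ge>m. coeff p l = 0)"
definition mdeg_lt :: "mp \<Rightarrow> nat \<Rightarrow> bool" where "mdeg_lt X m \<longleftrightarrow> (\<forall>i j. plt (X$i$j) m)"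
definition mlc :: "mp \<Rightarrow> nat \<Rightarrow> mat2" where "mlc X m = (\<chi> i j. coeff (X$i$j) m)"

lemma mlc_nth[simp]: "mlc X m $ i $ j = coeff (X$i$j) m" by (simp add: mlc_def)

lemma plt_mult: assumes "plt p m" "plt q d" shows "plt (p*q) (m + d - 1)"
  unfolding plt_def
proof (intro allI impI)
  fix l assume l: "l \<ge> m + d - 1"
  have "coeff p i * coeff q (l - i) = 0" if "i \<le> l" for i
  proof (cases "i \<ge> m")
    case True then show ?thesis using assms(1) by (simp add: plt_def)
  next
    case False then have "l - i \<ge> d" using l that by linarith
    then show ?thesis using assms(2) by (simp add: plt_def)
  qed
  then show "coeff (p * q) l = 0" unfolding coeff_mult by (intro sum.neutral) simp
qed

lemma plt_add: "plt p m \<Longrightarrow> plt q m \<Longrightarrow> plt (p + q) m"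
  by (simp add: plt_def)
lemma plt_mono: "plt p m \<Longrightarrow> m \<le> m' \<Longrightarrow> plt p m'"
  by (simp add: plt_def)
lemma plt_pderiv: "plt p (Suc m) \<Longrightarrow> plt (pderiv p) m"
  by (simp add: plt_def coeff_pderiv)
lemma plt_0: "plt p 0 \<Longrightarrow> p = 0"
  by (simp add: plt_def poly_eq_iff)
lemma plt_3: "plt [:a,b,c:] 3" unfolding plt_def
proof (intro allI impI)
  fix l :: nat assume "3 \<le> l"
  then have e: "l = Suc (Suc (Suc (l - 3)))" by arith
  show "coeff [:a,b,c:] l = 0" by (subst e) simp
qed
lemma plt_2: "plt [:a,b:] 2" unfolding plt_def
proof (intro allI impI)
  fix l :: nat assume "2 \<le> l"
  then have e: "l = Suc (Suc (l - 2))" by arith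
  show "coeff [:a,b:] l = 0" by (subst e) simp
qed
lemma plt_1: "plt [:a:] 1" unfolding plt_def
proof (intro allI impI)
  fix l :: nat assume "1 \<le> l"
  then have e: "l = Suc (l - 1)" by arith
  show "coeff [:a:] l = 0" by (subst e) simp
qed

lemma L1: "plt p (Suc m) \<Longrightarrow> coeff (pderiv p * [:c0,c1,c2:]) (Suc m) = c2 * real m * coeff p m"
  by (cases m) (auto simp: plt_def coeff_pderiv)
lemma L2: "plt p (Suc m) \<Longrightarrow> coeff (pderiv p * [:c0,c1:]) (Suc m) = 0"
  by (cases m) (auto simp: plt_def coeff_pderiv)
lemma L3: "plt p (Suc m) \<Longrightarrow> coeff (p * [:c0,c1:]) (Suc m) = c1 * coeff p m"
  by (cases m) (auto simp: plt_def coeff_pderiv)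
lemma L4: "plt p (Suc m) \<Longrightarrow> coeff (p * [:c0:]) (Suc m) = 0"
  by (cases m) (auto simp: plt_def coeff_pderiv)

lemma Tg_deg:
  assumes "mdeg_lt X (Suc m)"
  shows "mdeg_lt (mpd X ** pm2 [:x0,x1,x2:] [:y0,y1:] [:z0,z1:] [:w0,w1,w2:]
                + X ** pm2 [:g0,g1:] [:h0:] [:k0:] [:l0,l1:]) (Suc (Suc m))"
proof -
  have a: "plt (pderiv (X$i$j) * e) (Suc (Suc m))" if "plt e 3" for i j e
    using plt_mult[OF plt_pderiv[of "X$i$j" m] that] assms by (simp add: mdeg_lt_def)
  have a2: "plt (pderiv (X$i$j) * e) (Suc (Suc m))" if "plt e 2" for i j e
    using a plt_mono[OF that, of 3] by simp
  have b: "plt ((X$i$j) * e) (Suc (Suc m))" if "plt e 2" for i j e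
    using plt_mult[OF _ that, of "X$i$j" "Suc m"] assms by (simp add: mdeg_lt_def)
  have b1: "plt ((X$i$j) * e) (Suc (Suc m))" if "plt e 1" for i j e
    using b plt_mono[OF that, of 2] by simp
  show ?thesis unfolding mdeg_lt_def forall_2 vector_add_component mult2_nth mpd_nth pm2_nth
    by (intro conjI plt_add a a2 b b1 plt_3 plt_2 plt_1)
qed

lemma Tg_lc:
  assumes "mdeg_lt X (Suc m)"
  shows "mlc (mpd X ** pm2 [:x0,x1,x2:] [:y0,y1:] [:z0,z1:] [:w0,w1,w2:]
                + X ** pm2 [:g0,g1:] [:h0:] [:k0:] [:l0,l1:]) (Suc m)
         = mlc X m ** mat2 (real m * x2 + g1) 0 0 (real m * w2 + l1)"
proof -
  have h: "plt (X$i$j) (Suc m)" for i j using assms by (simp add: mdeg_lt_def)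
  show ?thesis unfolding mat_eq2 mlc_nth vector_add_component mult2_nth mpd_nth pm2_nth mat2_nth coeff_add
    by (simp only: L1[OF h] L2[OF h] L3[OF h] L4[OF h]) (simp add: algebra_simps)
qed

lemma mdeg_one: "mdeg_lt (mat 1) 1"
  unfolding mdeg_lt_def forall_2 plt_def by (auto simp: mat_def coeff_eq_0)
lemma mlc_one: "mlc (mat 1) 0 = mat 1"
  by (simp add: mat_eq2 mat_def)

context jac
begin

lemma pos: "al+v+be+2*real j+2 > 0" "al-v+be+2*real j+2 > 0"
  using v2 by (auto simp: abs_if split: if_splits)

definition sj :: "nat \<Rightarrow> real" where "sj j = al + real j + (be + real j) + 2"
definition r1 :: "nat \<Rightarrow> real" where "r1 j = (sj j + v + 2)/(sj j + v)"
definition r2 :: "nat \<Rightarrow> real" where "r2 j = (sj j - v + 2)/(sj j - v)"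
definition dg1 :: "nat \<Rightarrow> nat \<Rightarrow> real" where "dg1 j m = real m * - r1 j + - r1 j * (sj j + 2)"
definition dg2 :: "nat \<Rightarrow> nat \<Rightarrow> real" where "dg2 j m = real m * - r2 j + - r2 j * (sj j + 2)"

lemma T_deg: "mdeg_lt X (Suc m) \<Longrightarrow> mdeg_lt (T j X) (Suc (Suc m))"
  unfolding T_def El_def Gl_def Ep_def Gp_def Let_def by (rule Tg_deg)

lemma T_lc: "mdeg_lt X (Suc m) \<Longrightarrow> mlc (T j X) (Suc m) = mlc X m ** mat2 (dg1 j m) 0 0 (dg2 j m)"
  unfolding T_def El_def Gl_def Ep_def Gp_def Let_def
  apply (subst Tg_lc, assumption)
  apply (simp add: dg1_def dg2_def r1_def r2_def sj_def)
  done

lemma TT_deg: "mdeg_lt X (Suc m) \<Longrightarrow> mdeg_lt (TT j d X) (Suc m + d)"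
proof (induction d arbitrary: j)
  case 0 then show ?case by simp
next
  case (Suc d)
  have "mdeg_lt (TT (Suc j) d X) (Suc (m + d))" using Suc by simp
  then show ?case using T_deg by simp
qed

definition Pp :: "nat \<Rightarrow> real" where "Pp j = al+v+be+2*real j+2"
definition Pm :: "nat \<Rightarrow> real" where "Pm j = al-v+be+2*real j+2"
definition cs :: "nat \<Rightarrow> nat \<Rightarrow> real" where
  "cs j m = (-1)^m * pochhammer (al+be+2*real j+real m+3) m"
definition cc :: "nat \<Rightarrow> nat \<Rightarrow> mat2" where
  "cc j m = cs j m *\<^sub>R mat2 (Pp (j+m) / Pp j) 0 0 (Pm (j+m) / Pm j)"

lemma Ppos: "Pp j > 0" "Pm j > 0"
  using v2 unfolding Pp_def Pm_def by (auto simp: abs_if split: if_splits)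

lemma r1_eq: "r1 j = Pp (Suc j) / Pp j" and r2_eq: "r2 j = Pm (Suc j) / Pm j"
  unfolding r1_def r2_def sj_def Pp_def Pm_def
  by (rule arg_cong2[where f="(/)"]; simp add: algebra_simps)+

lemma cs_Suc: "cs j (Suc m) = - (real m + sj j + 2) * cs (Suc j) m"
  unfolding cs_def sj_def pochhammer_rec by (simp add: algebra_simps)

lemma TT_lc: "mdeg_lt (TT j m (mat 1)) (Suc m) \<and> mlc (TT j m (mat 1)) m = cc j m"
proof (induction m arbitrary: j)
  case 0
  have "cc j 0 = mat 1" using Ppos[of j] by (simp add: cc_def cs_def mat_eq2 mat_def)
  then show ?case using mdeg_one mlc_one by simp
next
  case (Suc m)
  have IH: "mdeg_lt (TT (Suc j) m (mat 1)) (Suc m)" "mlc (TT (Suc j) m (mat 1)) m = cc (Suc j) m"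
    using Suc by auto
  have deg: "mdeg_lt (TT j (Suc m) (mat 1)) (Suc (Suc m))" using T_deg[OF IH(1)] by simp
  have "mlc (TT j (Suc m) (mat 1)) (Suc m) = cc (Suc j) m ** mat2 (dg1 j m) 0 0 (dg2 j m)"
    using T_lc[OF IH(1)] IH(2) by simp
  also have "\<dots> = cc j (Suc m)"
  proof -
    have nz: "Pp j \<noteq> 0" "Pm j \<noteq> 0" "Pp (Suc j) \<noteq> 0" "Pm (Suc j) \<noteq> 0"
      using Ppos[of j] Ppos[of "Suc j"] by simp_all
    have e: "Suc j + m = j + Suc m" by simp
    show ?thesis unfolding cc_def mat_eq2 dg1_def dg2_def r1_eq r2_eq cs_Suc e
      using nz by (simp add: field_simps)
  qed
  finally show ?case using deg by simp
qed

end

lemma deriv_poly_fun: "deriv (poly p) = poly (pderiv p)"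
  by (rule ext) (rule DERIV_imp_deriv[OF poly_DERIV])

lemma funpow_deriv_poly: "(deriv ^^ k) (poly p) = poly ((pderiv ^^ k) p)"
  by (induction k) (simp_all add: deriv_poly_fun)

lemma mpd_funpow_nth: "(mpd ^^ k) X $ i $ j = (pderiv ^^ k) (X $ i $ j)"
  by (induction k) simp_all

lemma coeff_pderiv_funpow:
  fixes p :: "real poly"
  shows "coeff ((pderiv ^^ k) p) l = (fact (l+k) / fact l) * coeff p (l+k)"
proof (induction k arbitrary: l)
  case 0
  have "fact l \<noteq> (0::real)" by simp
  then show ?case by simp
next
  case (Suc k)
  have "coeff ((pderiv ^^ Suc k) p) l = real (Suc l) * coeff ((pderiv ^^ k) p) (Suc l)"
    by (simp add: coeff_pderiv)
  also have "\<dots> = real (Suc l) * (fact (Suc l + k) / fact (Suc l) * coeff p (Suc l + k))"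
    using Suc by simp
  also have "\<dots> = fact (l + Suc k) / fact l * coeff p (l + Suc k)"
  proof -
    have e: "Suc l + k = l + Suc k" by simp
    have f: "fact (Suc l) = real (Suc l) * (fact l::real)" by (simp only: fact_Suc of_nat_mult)
    have g: "x \<noteq> 0 \<Longrightarrow> x * (F / (x * fl) * c) = F / fl * c" for x F fl c :: real
      by simp
    show ?thesis unfolding e f by (rule g) simp
  qed
  finally show ?case .
qed

lemma plt_funpow_zero: "plt p n \<Longrightarrow> (pderiv ^^ n) p = 0"
  by (simp add: poly_eq_iff coeff_pderiv_funpow plt_def)

lemma mdeg_funpow_zero: "mdeg_lt X n \<Longrightarrow> (mpd ^^ n) X = 0"
  by (simp add: mat_eq2 mpd_funpow_nth plt_funpow_zero mdeg_lt_def)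

definition PP :: "(nat \<Rightarrow> nat \<Rightarrow> mat2) \<Rightarrow> nat \<Rightarrow> mp" where
  "PP C m = (\<chi> i j. \<Sum>l\<le>m. monom (C m l $ i $ j) l)"

lemma mev_PP: "mev (PP C m) t = mpoly C m t"
  by (simp add: vec_eq_iff PP_def mpoly_def poly_sum poly_monom mult.commute)

lemma coeff_PP: "coeff (PP C m $ i $ j) l = (if l \<le> m then C m l $ i $ j else 0)"
  by (simp add: PP_def coeff_sum coeff_monom)

lemma mdeg_PP: "mdeg_lt (PP C m) (Suc m)"
  by (simp add: mdeg_lt_def plt_def coeff_PP)

lemma coeff_cm_mult: "coeff ((cm L ** X) $ i $ j) l = (L ** mlc X l) $ i $ j"
  by (simp add: coeff_add)

lemma mdeg_eq0: "mdeg_lt X 0 \<Longrightarrow> X = 0"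
  by (simp add: mdeg_lt_def mat_eq2 plt_0)

lemma matrix_add_rdistrib2: "((A::'a::semiring_1^'n^'m) + B) ** C = A ** C + B ** C"
  by (simp add: vec_eq_iff matrix_matrix_mult_def sum.distrib distrib_right)
lemma matrix_diff_rdistrib2: "((A::'a::ring_1^'n^'m) - B) ** C = A ** C - B ** C"
  by (simp add: vec_eq_iff matrix_matrix_mult_def sum_subtractf left_diff_distrib)
lemma matrix_diff_ldistrib2: "(A::'a::ring_1^'n^'m) ** (B - C) = A ** B - A ** C"
  by (simp add: vec_eq_iff matrix_matrix_mult_def sum_subtractf right_diff_distrib)

context jac
begin

lemma Wl_0_eq: "Wl 0 = Wt al be v" by (simp add: Wl_def)

lemma ORTH:
  assumes mo: "monic_orth (Wt al be v) C"
  shows "M \<le> N \<Longrightarrow> mdeg_lt Z M \<Longrightarrow> EI (\<lambda>t. mev (PP C N) t ** Wl 0 t ** transpose (mev Z t)) 0"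
proof (induction M arbitrary: Z)
  case 0
  then have "Z = 0" by (simp add: mdeg_eq0)
  then show ?case by (intro EI_zero) (simp add: mev_zero transpose_def vec_eq_iff)
next
  case (Suc M)
  define L where "L = mlc Z M"
  define Z' where "Z' = Z - cm L ** PP C M"
  have dZ': "mdeg_lt Z' M" unfolding mdeg_lt_def plt_def
  proof (intro allI impI)
    fix i j l assume l: "M \<le> l"
    have cZ: "coeff (Z $ i $ j) l' = 0" if "l' \<ge> Suc M" for i j l'
      using Suc.prems(2) that by (simp add: mdeg_lt_def plt_def)
    show "coeff (Z' $ i $ j) l = 0"
    proof (cases "l = M")
      case True
      have C1: "C M M = mat 1" using mo by (simp add: monic_orth_def)
      show ?thesis unfolding Z'_def using True exhaust_2[of i] exhaust_2[of j]
        by (auto simp: coeff_PP C1 L_def mat_def coeff_add)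
    next
      case False
      then show ?thesis using l cZ unfolding Z'_def by (simp add: coeff_PP coeff_add)
    qed
  qed
  have IH: "EI (\<lambda>t. mev (PP C N) t ** Wl 0 t ** transpose (mev Z' t)) 0"
    using Suc.IH[OF _ dZ'] Suc.prems by simp
  have orth: "EI (\<lambda>t. mev (PP C N) t ** Wl 0 t ** transpose (mev (PP C M) t)) 0"
  proof -
    have "N \<noteq> M" using Suc.prems by simp
    then have "((\<lambda>t. mpoly C N t ** Wt al be v t ** transpose (mpoly C M t)) has_integral 0) {0..1}"
      using mo by (simp add: monic_orth_def)
    then show ?thesis by (simp add: EI_of_has_integral mev_PP Wl_0_eq)
  qed
  have "EI (\<lambda>t. mev (PP C N) t ** Wl 0 t ** transpose (mev Z' t) +
     (mev (PP C N) t ** Wl 0 t ** transpose (mev (PP C M) t)) ** transpose L) (0 + 0 ** transpose L)"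
    by (intro EI_add IH EI_rmult orth)
  then show ?case
  proof (rule EI_cong)
    fix t
    have "Z = Z' + cm L ** PP C M" by (simp add: Z'_def)
    then have "mev Z t = mev Z' t + L ** mev (PP C M) t" by (simp add: mev_add mev_mult mev_cm)
    then show "mev (PP C N) t ** Wl 0 t ** transpose (mev Z' t) +
     (mev (PP C N) t ** Wl 0 t ** transpose (mev (PP C M) t)) ** transpose L =
     mev (PP C N) t ** Wl 0 t ** transpose (mev Z t)"
      by (simp add: transpose_add2 matrix_transpose_mul matrix_add_ldistrib matrix_mul_assoc)
  qed simp
qed

lemma T_der:
  assumes t: "0 < t" "t < 1"
  shows "mder (\<lambda>s. mev X s ** Wl (Suc j) s) (mev (T j X) t ** Wl j t) t"
proof (rule mder_cong)
  show "mder (\<lambda>s. mev X s ** Wl (Suc j) s) (mev (mpd X) t ** Wl (Suc j) t + mev X t ** (mev (Gl j) t ** Wl j t)) t"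
    by (intro mder_mult mder_mev Wl_der t)
  show "mev (mpd X) t ** Wl (Suc j) t + mev X t ** (mev (Gl j) t ** Wl j t) = mev (T j X) t ** Wl j t"
    unfolding Wl_Suc[OF t] T_def mev_add mev_mult
    by (simp add: matrix_add_rdistrib2 matrix_mul_assoc)
qed

lemma Pchain:
  assumes mo: "monic_orth (Wt al be v) C" and D: "mdeg_lt D (Suc n')"
  shows "i \<le> k \<Longrightarrow> EI (\<lambda>t. mev ((mpd ^^ i) (PP C (Suc n' + k))) t ** Wl i t ** transpose (mev (TT i (k - i) D) t)) 0"
proof (induction i)
  case 0
  have "mdeg_lt (TT 0 k D) (Suc n' + k)" by (rule TT_deg[OF D])
  then show ?case using ORTH[OF mo, of "Suc n' + k" "Suc n' + k"] by simp
next
  case (Suc i)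
  have e: "k - i = Suc (k - Suc i)" using Suc.prems by simp
  have "EI (\<lambda>t. mev ((mpd ^^ i) (PP C (Suc n' + k))) t ** Wl i t ** transpose (mev (T i (TT (Suc i) (k - Suc i) D)) t)) 0"
    using Suc by (simp add: e)
  from IBP_BA[OF this] show ?case by simp
qed

lemma Rchain:
  assumes D: "mdeg_lt D n"
  shows "d \<le> n \<Longrightarrow> EI (\<lambda>t. mev ((mpd ^^ (n - d)) D) t ** Wl (k + (n - d)) t ** transpose (mev (TT (k + (n - d)) d (mat 1)) t)) 0"
proof (induction d)
  case 0
  have "(mpd ^^ n) D = 0" by (rule mdeg_funpow_zero[OF D])
  then show ?case by (intro EI_zero) (simp add: mev_zero)
next
  case (Suc d)
  define i where "i = n - Suc d"
  have e1: "n - d = Suc i" and e2: "n - Suc d = i" using Suc.prems by (simp_all add: i_def)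
  have "EI (\<lambda>t. mev (mpd ((mpd ^^ i) D)) t ** Wl (Suc (k + i)) t ** transpose (mev (TT (Suc (k + i)) d (mat 1)) t)) 0"
    using Suc e1 by simp
  from IBP_AB[OF this] show ?case unfolding e2 by simp
qed

lemma Wder:
  assumes t: "0 < t" "t < 1"
  shows "m \<le> N \<Longrightarrow> (deriv ^^ m) (\<lambda>s. Wl N s $ i $ j) t = (mev (TT (N - m) m (mat 1)) t ** Wl (N - m) t) $ i $ j"
  using t
proof (induction m arbitrary: t)
  case 0 then show ?case by (simp add: mev_one)
next
  case (Suc m)
  define jj where "jj = N - Suc m"
  have e: "N - m = Suc jj" using Suc.prems by (simp add: jj_def)
  have IH: "\<And>s. s \<in> {0<..<1} \<Longrightarrow> (deriv ^^ m) (\<lambda>s. Wl N s $ i $ j) s = (mev (TT (Suc jj) m (mat 1)) s ** Wl (Suc jj) s) $ i $ j"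
    using Suc e by simp
  have d: "((\<lambda>s. (mev (TT (Suc jj) m (mat 1)) s ** Wl (Suc jj) s) $ i $ j) has_real_derivative
      (mev (T jj (TT (Suc jj) m (mat 1))) t ** Wl jj t) $ i $ j) (at t)"
    using T_der[OF Suc.prems(2,3)] unfolding mder_def by blast
  have "((deriv ^^ m) (\<lambda>s. Wl N s $ i $ j) has_real_derivative
      (mev (T jj (TT (Suc jj) m (mat 1))) t ** Wl jj t) $ i $ j) (at t)"
    by (rule has_field_derivative_transform_within_open[OF d, of "{0<..<1}"]) (use Suc.prems IH in auto)
  then show ?case by (simp add: DERIV_imp_deriv jj_def)
qed

end

lemma Qdet_poly:
  assumes "v \<noteq> 0" "a+v-b \<noteq> 0" "a-v-b \<noteq> 0" "a+b+2+v \<noteq> 0" "a+b+2-v \<noteq> 0"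
  defines "K \<equiv> - (v * v) * (a+b+2+v) * (a+b+2-v) / ((a+v-b)*(a-v-b))"
  shows "Qp a b v $1$1 * Qp a b v $2$2 - Qp a b v $1$2 * Qp a b v $2$1 = [:0, 0, K, -2*K, K:]"
proof -
  obtain D1 where D1: "a+v-b = D1" by simp
  obtain D2 where D2: "a-v-b = D2" by simp
  obtain P where P: "a+b+2+v = P" by simp
  obtain M where M: "a+b+2-v = M" by simp
  have nz: "v \<noteq> 0" "D1 \<noteq> 0" "D2 \<noteq> 0" "P \<noteq> 0" "M \<noteq> 0" using assms D1 D2 P M by auto
  show ?thesis unfolding K_def Qp_def D1 D2 P M
    apply (simp add: pCons_eq_iff)
    apply (intro conjI)
    apply (simp_all add: field_simps nz)
    apply (intro conjI)?
    apply (unfold P[symmetric] M[symmetric] D1[symmetric] D2[symmetric])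
    apply algebra+
    done
qed

context jac
begin

abbreviation "Qk k \<equiv> Qp (al + real k) (be + real k) v"

lemma Qk_det:
  assumes t: "0 < t" "t < 1"
  shows "poly (Qk k $1$1) t * poly (Qk k $2$2) t - poly (Qk k $1$2) t * poly (Qk k $2$1) t > 0"
proof -
  define a where "a = al + real k"
  define b where "b = be + real k"
  define K where "K = - (v * v) * (a+b+2+v) * (a+b+2-v) / ((a+v-b)*(a-v-b))"
  have nz: "v \<noteq> 0" "a+v-b \<noteq> 0" "a-v-b \<noteq> 0" "a+b+2+v \<noteq> 0" "a+b+2-v \<noteq> 0"
    using lev(1) lev(2)[of k] lev(3)[of k] lev(4)[of k] lev(5)[of k] by (simp_all add: a_def b_def)
  have "poly (Qk k $1$1 * Qk k $2$2 - Qk k $1$2 * Qk k $2$1) t = poly [:0, 0, K, -2*K, K:] t"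
    unfolding a_def[symmetric] b_def[symmetric] K_def using Qdet_poly[OF nz] by simp
  then have e: "poly (Qk k $1$1) t * poly (Qk k $2$2) t - poly (Qk k $1$2) t * poly (Qk k $2$1) t = K * (t*(1-t))^2"
    by (simp add: algebra_simps power2_eq_square)
  have ab: "a - b = al - be" by (simp add: a_def b_def)
  have "\<bar>al-be\<bar>^2 < \<bar>v\<bar>^2" by (rule power_strict_mono[OF v1]) simp_all
  then have sq: "(al-be)^2 < v^2" by simp
  have "(a+v-b)*(a-v-b) = (al-be)^2 - v^2" unfolding ab[symmetric] by (simp add: algebra_simps power2_eq_square)
  then have n: "(a+v-b)*(a-v-b) < 0" using sq by simp
  have p: "a+b+2+v > 0" "a+b+2-v > 0" using pos[of k] by (simp_all add: a_def b_def algebra_simps)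
  have "v * v > 0" using nz(1) by (auto simp add: zero_less_mult_iff linorder_neq_iff)
  then have "(v * v) * (a+b+2+v) * (a+b+2-v) > 0" using p by simp
  then have "K > 0" unfolding K_def using n by (simp add: divide_pos_neg)
  moreover have "(t*(1-t))^2 > 0" using t by simp
  ultimately show ?thesis unfolding e by simp
qed

lemma Qk_sym: "Qk k $1$2 = Qk k $2$1" by (simp add: Qp_def)

lemma Qk_11:
  assumes t: "0 < t" "t < 1"
  shows "poly (Qk k $1$1) t > 0"
proof (rule ccontr)
  assume "\<not> ?thesis"
  then have le: "poly (Qk k $1$1) t \<le> 0" by simp
  have f0: "poly (Qk k $1$1) 0 > 0" using al by (simp add: Qp_def)
  have cont: "continuous_on {0..t} (\<lambda>s. poly (Qk k $1$1) s)" by (intro continuous_intros)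
  obtain x where x: "0 \<le> x" "x \<le> t" "poly (Qk k $1$1) x = 0"
    using IVT2'[of "\<lambda>s. poly (Qk k $1$1) s" t 0 0, OF _ _ _ cont] le f0 t by auto
  have "x \<noteq> 0" using x f0 by auto
  then have "0 < x" "x < 1" using x t by auto
  from Qk_det[OF this, of k] x(3) Qk_sym show False by simp
qed

lemma qf_pos:
  assumes t: "0 < t" "t < 1"
  shows "x*x * poly (Qk k $1$1) t + x*y * (poly (Qk k $1$2) t + poly (Qk k $2$1) t) + y*y * poly (Qk k $2$2) t \<ge> 0"
    and "x*x * poly (Qk k $1$1) t + x*y * (poly (Qk k $1$2) t + poly (Qk k $2$1) t) + y*y * poly (Qk k $2$2) t = 0
         \<Longrightarrow> x = 0 \<and> y = 0"
proof -
  define A where "A = poly (Qk k $1$1) t"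
  define B where "B = poly (Qk k $1$2) t"
  define Cc where "Cc = poly (Qk k $2$2) t"
  have B2: "poly (Qk k $2$1) t = B" using Qk_sym B_def by simp
  have A: "A > 0" using Qk_11[OF t] A_def by simp
  have det: "A * Cc - B * B > 0" using Qk_det[OF t, of k] unfolding A_def B_def Cc_def Qk_sym by simp
  have id: "A * (x*x*A + x*y*(B+B) + y*y*Cc) = (A*x + B*y)^2 + (A*Cc - B*B) * y^2"
    by (simp add: algebra_simps power2_eq_square)
  have "A * (x*x*A + x*y*(B+B) + y*y*Cc) \<ge> 0" unfolding id using det by (intro add_nonneg_nonneg) auto
  then show "x*x * poly (Qk k $1$1) t + x*y * (poly (Qk k $1$2) t + poly (Qk k $2$1) t) + y*y * poly (Qk k $2$2) t \<ge> 0"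
    unfolding B2 A_def[symmetric] B_def[symmetric] Cc_def[symmetric] using A
    by (simp add: zero_le_mult_iff)
  assume "x*x * poly (Qk k $1$1) t + x*y * (poly (Qk k $1$2) t + poly (Qk k $2$1) t) + y*y * poly (Qk k $2$2) t = 0"
  then have "(A*x + B*y)^2 + (A*Cc - B*B) * y^2 = 0"
    unfolding id[symmetric] B2 A_def[symmetric] B_def[symmetric] Cc_def[symmetric] by simp
  moreover have "(A*x + B*y)^2 \<ge> 0" "(A*Cc - B*B) * y^2 \<ge> 0" using det by auto
  ultimately have "(A*Cc - B*B) * y^2 = 0" "(A*x + B*y)^2 = 0" by linarith+
  then have "y = 0" "A*x + B*y = 0" using det by auto
  then show "x = 0 \<and> y = 0" using A by simp
qed

end

lemma minv_2:
  fixes A :: mat2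
  assumes "A$1$1*A$2$2 - A$1$2*A$2$1 \<noteq> 0"
  shows "A ** matrix_inv A = mat 1" "matrix_inv A ** A = mat 1"
proof -
  have "invertible A" using assms by (simp add: invertible_det_nz det_2)
  then have "\<exists>B. A ** B = mat 1 \<and> B ** A = mat 1" by (simp add: invertible_def)
  then have "A ** matrix_inv A = mat 1 \<and> matrix_inv A ** A = mat 1"
    unfolding matrix_inv_def by (rule someI_ex)
  then show "A ** matrix_inv A = mat 1" "matrix_inv A ** A = mat 1" by simp_all
qed

lemma trace_form:
  fixes A B :: mat2
  shows "(A ** B ** transpose A)$1$1 + (A ** B ** transpose A)$2$2 =
    (A$1$1*A$1$1 * B$1$1 + A$1$1*A$1$2 * (B$1$2 + B$2$1) + A$1$2*A$1$2 * B$2$2) +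
    (A$2$1*A$2$1 * B$1$1 + A$2$1*A$2$2 * (B$1$2 + B$2$1) + A$2$2*A$2$2 * B$2$2)"
  by (simp add: transpose_def algebra_simps)

context jac
begin

lemma EI_zero_imp:
  assumes EI: "EI (\<lambda>s. mev D s ** Wl k s ** transpose (mev D s)) 0" and t0: "0 < t0" "t0 < 1"
  shows "mev D t0 = 0"
proof -
  define u where "u s = s powr (al+real k) * (1-s) powr (be+real k)" for s
  define q where "q s x y = x*x * poly (Qk k $1$1) s + x*y * (poly (Qk k $1$2) s + poly (Qk k $2$1) s) + y*y * poly (Qk k $2$2) s" for s x y
  define f where "f s = (mev D s ** Wl k s ** transpose (mev D s))$1$1 + (mev D s ** Wl k s ** transpose (mev D s))$2$2" for s
  have fform: "f = (\<lambda>s. u s * (q s (poly (D$1$1) s) (poly (D$1$2) s) + q s (poly (D$2$1) s) (poly (D$2$2) s)))"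
  proof (rule ext)
    fix s
    have W: "Wl k s = u s *\<^sub>R mev (Qk k) s" by (simp add: Wl_def Wt_eq u_def)
    have "f s = u s * ((mev D s ** mev (Qk k) s ** transpose (mev D s))$1$1 + (mev D s ** mev (Qk k) s ** transpose (mev D s))$2$2)"
      unfolding f_def W mult_scaleR_right2 mult_scaleR_left2 by (simp add: algebra_simps)
    then show "f s = u s * (q s (poly (D$1$1) s) (poly (D$1$2) s) + q s (poly (D$2$1) s) (poly (D$2$2) s))"
      unfolding trace_form q_def by (simp del: mult2_nth)
  qed
  have fint: "(f has_integral 0) {0..1}"
  proof -
    have "((\<lambda>s. (mev D s ** Wl k s ** transpose (mev D s))$1$1) has_integral 0) {0..1}"
      "((\<lambda>s. (mev D s ** Wl k s ** transpose (mev D s))$2$2) has_integral 0) {0..1}"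
      using EI[unfolded EI_def, rule_format, of 1 1] EI[unfolded EI_def, rule_format, of 2 2] by simp_all
    from has_integral_add[OF this] show ?thesis unfolding f_def by simp
  qed
  have fnn: "0 \<le> f s" if "s \<in> {0..1}" for s
  proof (cases "s = 0 \<or> s = 1")
    case True then have "u s = 0" by (auto simp: u_def)
    then show ?thesis unfolding fform by simp
  next
    case False
    then have s: "0 < s" "s < 1" using that by auto
    have "u s > 0" using s by (simp add: u_def)
    moreover have "q s x y \<ge> 0" for x y using qf_pos(1)[OF s] by (simp add: q_def)
    ultimately show ?thesis unfolding fform by (simp add: add_nonneg_nonneg)
  qed
  define e where "e = min t0 (1 - t0) / 2"
  have e: "e > 0" "0 < t0 - e" "t0 + e < 1" using t0 by (auto simp: e_def min_def field_simps)
  have sub: "{t0 - e..t0 + e} \<subseteq> {0..1}" using e by auto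
  have intsub: "f integrable_on {t0 - e..t0 + e}"
    by (rule integrable_subinterval_real[OF has_integral_integrable[OF fint] sub])
  then have hi: "(f has_integral integral {t0 - e..t0 + e} f) {t0 - e..t0 + e}" by auto
  have "integral {t0 - e..t0 + e} f \<le> 0"
    by (rule has_integral_subset_le[OF sub hi fint]) (use fnn in auto)
  moreover have "integral {t0 - e..t0 + e} f \<ge> 0"
    by (rule has_integral_nonneg[OF hi]) (use fnn sub in auto)
  ultimately have hz: "(f has_integral 0) {t0 - e..t0 + e}" using hi by simp
  have cont: "continuous_on {t0 - e..t0 + e} f"
    unfolding fform u_def q_def using e by (intro continuous_intros) auto
  have "f t0 = 0"
    by (rule has_integral_0_cbox_imp_0[of "t0 - e" "t0 + e" f t0]) (use cont fnn sub hz e in auto)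
  moreover have "u t0 > 0" using t0 by (simp add: u_def)
  ultimately have "q t0 (poly (D$1$1) t0) (poly (D$1$2) t0) + q t0 (poly (D$2$1) t0) (poly (D$2$2) t0) = 0"
    unfolding fform by simp
  moreover have qn: "q t0 x y \<ge> 0" for x y using qf_pos(1)[OF t0] by (simp add: q_def)
  ultimately have "q t0 (poly (D$1$1) t0) (poly (D$1$2) t0) = 0 \<and> q t0 (poly (D$2$1) t0) (poly (D$2$2) t0) = 0"
    using add_nonneg_eq_0_iff[OF qn qn] by blast
  then have "q t0 (poly (D$1$1) t0) (poly (D$1$2) t0) = 0" "q t0 (poly (D$2$1) t0) (poly (D$2$2) t0) = 0"
    by simp_all
  then have "poly (D$1$1) t0 = 0 \<and> poly (D$1$2) t0 = 0" "poly (D$2$1) t0 = 0 \<and> poly (D$2$2) t0 = 0"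
    using qf_pos(2)[OF t0] unfolding q_def by blast+
  then show ?thesis by (simp add: mat_eq2)
qed

end

context jac
begin

lemma mderiv_poly: "mderiv k (mpoly C N) t = mev ((mpd ^^ k) (PP C N)) t"
proof -
  have e: "(\<lambda>s. mpoly C N s $ i $ j) = poly (PP C N $ i $ j)" for i j
    by (rule ext) (simp flip: mev_PP)
  show ?thesis unfolding mderiv_def by (simp add: vec_eq_iff e funpow_deriv_poly mpd_funpow_nth)
qed

lemma mderiv_W: assumes "0 < t" "t < 1"
  shows "mderiv n (Wt (al + real (k + n)) (be + real (k + n)) v) t = mev (TT k n (mat 1)) t ** Wl k t"
proof -
  have "Wt (al + real (k + n)) (be + real (k + n)) v = Wl (k + n)" by (simp add: Wl_def)
  then show ?thesis unfolding mderiv_def using Wder[OF assms, of n "k+n"] by (simp add: vec_eq_iff)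
qed

lemma Wl_inv: assumes t: "0 < t" "t < 1" shows "Wl k t ** matrix_inv (Wl k t) = mat 1"
proof (rule minv_2)
  define u where "u = t powr (al + real k) * (1-t) powr (be + real k)"
  have u: "u > 0" using t by (simp add: u_def)
  have W: "Wl k t = u *\<^sub>R mev (Qk k) t" by (simp add: Wl_def Wt_eq u_def)
  have "Wl k t $1$1 * Wl k t $2$2 - Wl k t $1$2 * Wl k t $2$1 =
     u * u * (poly (Qk k $1$1) t * poly (Qk k $2$2) t - poly (Qk k $1$2) t * poly (Qk k $2$1) t)"
    unfolding W by (simp add: algebra_simps)
  moreover have "u * u * (poly (Qk k $1$1) t * poly (Qk k $2$2) t - poly (Qk k $1$2) t * poly (Qk k $2$1) t) > 0"
    using u Qk_det[OF t, of k] by simp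
  ultimately show "Wl k t $1$1 * Wl k t $2$2 - Wl k t $1$2 * Wl k t $2$1 \<noteq> 0" by linarith
qed

lemma cs_pos: "cs j m \<noteq> 0"
proof -
  have "al + be + 2 * real j + real m + 3 > 0" using al be by simp
  then show ?thesis unfolding cs_def using pochhammer_pos by (metis mult_eq_0_iff power_eq_0_iff zero_neq_neg_one less_irrefl)
qed

lemma cc_inv: "matrix_inv (cc k n) ** cc k n = mat 1"
proof (rule minv_2)
  have "Pp j \<noteq> 0" "Pm j \<noteq> 0" for j using Ppos[of j] by simp_all
  then show "cc k n $1$1 * cc k n $2$2 - cc k n $1$2 * cc k n $2$1 \<noteq> 0"
    using cs_pos[of k n] by (simp add: cc_def)
qed

lemma main:
  fixes C :: "nat \<Rightarrow> nat \<Rightarrow> mat2" and k n :: nat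
  assumes mo: "monic_orth (Wt al be v) C" and n: "n \<ge> 1" and t: "t \<in> {0<..<1}"
  shows "(fact (n + k - k) / fact (n + k)) *\<^sub>R mderiv k (mpoly C (n + k)) t =
    matrix_inv (((-1) ^ n * pochhammer (al + be + 3 + 2 * real k + real n) n) *\<^sub>R
        mat2 (((al + v + be) + 2 * (real k + 1 + real n)) / ((al + v + be) + 2 * (real k + 1))) 0
             0 (((al - v + be) + 2 * (real k + 1 + real n)) / ((al - v + be) + 2 * (real k + 1))))
    ** mderiv n (Wt (al + real (k + n)) (be + real (k + n)) v) t
    ** matrix_inv (Wt (al + real k) (be + real k) v t)"
proof -
  obtain n' where n': "n = Suc n'" using n by (cases n) auto
  have t0: "0 < t" "t < 1" using t by auto
  define c :: real where "c = fact n / fact (n + k)"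
  define PmP where "PmP = pmsc [:c:] ((mpd ^^ k) (PP C (n + k)))"
  define S where "S = TT k n (mat 1)"
  define Ci where "Ci = matrix_inv (cc k n)"
  define R where "R = cm Ci ** S"
  define D where "D = PmP - R"
  have cceq: "((-1) ^ n * pochhammer (al + be + 3 + 2 * real k + real n) n) *\<^sub>R
        mat2 (((al + v + be) + 2 * (real k + 1 + real n)) / ((al + v + be) + 2 * (real k + 1))) 0
             0 (((al - v + be) + 2 * (real k + 1 + real n)) / ((al - v + be) + 2 * (real k + 1))) = cc k n"
  proof -
    have pe: "pochhammer (al + be + 3 + 2 * real k + real n) n = pochhammer (al+be+2*real k+real n+3) n"
      by (rule arg_cong[where f="\<lambda>x. pochhammer x n"]) simp
    have "(al + v + be) + 2 * (real k + 1 + real n) = Pp (k + n)"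
      "(al + v + be) + 2 * (real k + 1) = Pp k"
      "(al - v + be) + 2 * (real k + 1 + real n) = Pm (k + n)"
      "(al - v + be) + 2 * (real k + 1) = Pm k" by (simp_all add: Pp_def Pm_def algebra_simps)
    then show ?thesis unfolding cc_def cs_def pe by simp
  qed
  have LHS: "(fact (n + k - k) / fact (n + k)) *\<^sub>R mderiv k (mpoly C (n + k)) t = mev PmP t"
    unfolding PmP_def mev_pmsc mderiv_poly c_def by simp
  have Winv: "Wl k t ** matrix_inv (Wl k t) = mat 1" by (rule Wl_inv[OF t0])
  have RHS: "matrix_inv (cc k n) ** mderiv n (Wt (al + real (k + n)) (be + real (k + n)) v) t
      ** matrix_inv (Wt (al + real k) (be + real k) v t) = Ci ** mev S t"
  proof -
    have "Wt (al + real k) (be + real k) v t = Wl k t" by (simp add: Wl_def)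
    then show ?thesis unfolding mderiv_W[OF t0] Ci_def S_def
      by (simp add: matrix_mul_assoc[symmetric] Winv)
  qed
  have TTS: "mdeg_lt S (Suc n)" "mlc S n = cc k n" using TT_lc[of k n] by (simp_all add: S_def)
  have degD: "mdeg_lt D n" unfolding mdeg_lt_def plt_def
  proof (intro allI impI)
    fix i j l assume l: "n \<le> l"
    have cP: "coeff (PmP $ i $ j) l = c * (fact (l + k) / fact l) * (if l + k \<le> n + k then C (n + k) (l + k) $ i $ j else 0)"
      by (simp add: PmP_def mpd_funpow_nth coeff_pderiv_funpow coeff_PP)
    have cR: "coeff (R $ i $ j) l = (Ci ** mlc S l) $ i $ j" unfolding R_def by (rule coeff_cm_mult)
    show "coeff (D $ i $ j) l = 0"
    proof (cases "l = n")
      case True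
      have C1: "C (n + k) (n + k) = mat 1" using mo by (simp add: monic_orth_def)
      have c1: "c * (fact (n + k) / fact n) = 1" by (simp add: c_def)
      have "Ci ** cc k n = mat 1" unfolding Ci_def by (rule cc_inv)
      have "coeff (PmP $ i $ j) l = (c * (fact (n + k) / fact n)) * (mat 1 :: mat2) $ i $ j"
        using cP True C1 by simp
      then have A: "coeff (PmP $ i $ j) l = (mat 1 :: mat2) $ i $ j" unfolding c1 by simp
      have B: "coeff (R $ i $ j) l = (mat 1 :: mat2) $ i $ j" using cR TTS(2) True \<open>Ci ** cc k n = mat 1\<close> by simp
      show ?thesis by (simp add: D_def coeff_diff A B)
    next
      case False
      then have "l > n" using l by simp
      then have "mlc S l = 0" using TTS(1) by (simp add: mat_eq2 mdeg_lt_def plt_def)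
      then show ?thesis using \<open>l > n\<close> cP cR by (simp add: D_def)
    qed
  qed
  have EP: "EI (\<lambda>s. mev PmP s ** Wl k s ** transpose (mev D s)) 0"
  proof -
    have "EI (\<lambda>s. mev ((mpd ^^ k) (PP C (Suc n' + k))) s ** Wl k s ** transpose (mev (TT k (k - k) D) s)) 0"
      using Pchain[OF mo, of D n' k k] degD n' by simp
    then have "EI (\<lambda>s. c *\<^sub>R (mev ((mpd ^^ k) (PP C (n + k))) s ** Wl k s ** transpose (mev D s))) (c *\<^sub>R 0)"
      using n' by (intro EI_scale) simp
    then show ?thesis
      by (rule EI_cong) (simp_all add: PmP_def mev_pmsc mult_scaleR_left2)
  qed
  have ER: "EI (\<lambda>s. mev R s ** Wl k s ** transpose (mev D s)) 0"
  proof -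
    have "EI (\<lambda>s. mev ((mpd ^^ (n - n)) D) s ** Wl (k + (n - n)) s ** transpose (mev (TT (k + (n - n)) n (mat 1)) s)) 0"
      using Rchain[OF degD, of n] by simp
    then have "EI (\<lambda>s. mev D s ** Wl k s ** transpose (mev S s)) 0" by (simp add: S_def)
    then have "EI (\<lambda>s. Ci ** transpose (mev D s ** Wl k s ** transpose (mev S s))) (Ci ** transpose 0)"
      by (intro EI_lmult EI_transpose)
    moreover have "Ci ** transpose (mev D s ** Wl k s ** transpose (mev S s)) = mev R s ** Wl k s ** transpose (mev D s)" for s
      by (simp only: matrix_transpose_mul transpose_transpose Wl_sym R_def mev_mult mev_cm matrix_mul_assoc)
    moreover have "Ci ** transpose (0::mat2) = 0"
      by (simp add: vec_eq_iff transpose_def matrix_matrix_mult_def)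
    ultimately show ?thesis by (metis (no_types, lifting) EI_cong)
  qed
  have "EI (\<lambda>s. mev PmP s ** Wl k s ** transpose (mev D s) - mev R s ** Wl k s ** transpose (mev D s)) (0 - 0)"
    by (rule EI_diff[OF EP ER])
  then have "EI (\<lambda>s. mev D s ** Wl k s ** transpose (mev D s)) 0"
    by (rule EI_cong) (simp_all add: D_def mev_diff matrix_diff_rdistrib2)
  then have "mev D t = 0" by (rule EI_zero_imp[OF _ t0])
  then have "mev PmP t = Ci ** mev S t" by (simp add: D_def mev_diff R_def mev_mult mev_cm)
  then show ?thesis unfolding cceq LHS RHS .
qed

end

theorem proposition6p3:
  fixes \<alpha> \<beta> v :: real and C :: "nat \<Rightarrow> nat \<Rightarrow> mat2" and k n :: nat
  assumes "\<alpha> > -1" and "\<beta> > -1"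
    and "\<bar>\<alpha> - \<beta>\<bar> < \<bar>v\<bar>" and "\<bar>v\<bar> < \<alpha> + \<beta> + 2"
    and "monic_orth (Wt \<alpha> \<beta> v) C"
    and "n \<ge> 1"
    and "t \<in> {0<..<1}"
  shows "(fact (n + k - k) / fact (n + k)) *\<^sub>R mderiv k (mpoly C (n + k)) t =
    matrix_inv (((-1) ^ n * pochhammer (\<alpha> + \<beta> + 3 + 2 * real k + real n) n) *\<^sub>R
        mat2 (((\<alpha> + v + \<beta>) + 2 * (real k + 1 + real n)) / ((\<alpha> + v + \<beta>) + 2 * (real k + 1))) 0
             0 (((\<alpha> - v + \<beta>) + 2 * (real k + 1 + real n)) / ((\<alpha> - v + \<beta>) + 2 * (real k + 1))))
    ** mderiv n (Wt (\<alpha> + real (k + n)) (\<beta> + real (k + n)) v) t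
    ** matrix_inv (Wt (\<alpha> + real k) (\<beta> + real k) v t)"
proof -
  interpret jac \<alpha> \<beta> v using assms(1-4) by unfold_locales
  show ?thesis by (rule main[OF assms(5-7)])
qed

end
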